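(* Fix $m\ge2$, an integer panel size $k\ge1$, and a budget $0<B<m$. For every panel decision function $\widetilde x:\mathcal L^k\to\mathcal X_B$ there exists a participatory budgeting instance $\langle m,B,(\mathrm{Cost}_1,\dots,\mathrm{Cost}_n)\rangle$ such that for every $\rho>1$, $$\mathbb E_{S\sim\mathcal U_{k,n}}\big[\textsc{Social-Cost}(\widetilde x(S))\big]>\rho\cdot\textsc{Social-Opt}.$$
   Context: A participatory budgeting instance $\langle m,B,(\mathrm{Cost}_1,\dots,\mathrm{Cost}_n)\rangle$: $m$ projects, budget $B>0$, and for each agent $i\in[n]$ a cost function $\mathrm{Cost}_i:[0,1]^m\to[0,1]$ that is monotone (non-increasing when the allocation increases coordinatewise) and $1$-Lipschitz w.r.t. $\|\cdot\|_1$. $\mathcal L$ is the set of $1$-Lipschitz functions $[0,1]^m\to[0,1]$; $\mathcal X_B=\{x\in[0,1]^m:\sum_jx_j\le B\}$. For a panel $S$ of size $k$ (with $n\ge k$), $\widetilde x(S)$ denotes $\widetilde x$ applied to $(\mathrm{Cost}_i)_{i\in S}$. $\textsc{Social-Cost}(x)=\frac1n\sum_i\mathrm{Cost}_i(x)$, $\textsc{Social-Opt}=\min_{x\in\mathcal X_B}\textsc{Social-Cost}(x)$. $\mathcal U_{k,n}$ is the uniform distribution over size-$k$ subsets of $[n]$. *)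

theory Defs
  imports "HOL-Analysis.Analysis"
begin

text \<open>Allocations live in [0,1]^m, modelled as vectors of type real^'m with m = CARD('m).\<close>

definition cube :: "(real^'m) set" where
  "cube = {x. \<forall>j. 0 \<le> x$j \<and> x$j \<le> 1}"

definition l1dist :: "real^'m \<Rightarrow> real^'m \<Rightarrow> real" where
  "l1dist x y = (\<Sum>j\<in>UNIV. \<bar>x$j - y$j\<bar>)"

definition Lfun :: "(real^'m \<Rightarrow> real) \<Rightarrow> bool" where
  "Lfun f \<longleftrightarrow> (\<forall>x\<in>cube. 0 \<le> f x \<and> f x \<le> 1) \<and>
               (\<forall>x\<in>cube. \<forall>y\<in>cube. \<bar>f x - f y\<bar> \<le> l1dist x y)"

definition mono_cost :: "(real^'m \<Rightarrow> real) \<Rightarrow> bool" where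
  "mono_cost f \<longleftrightarrow> (\<forall>x\<in>cube. \<forall>y\<in>cube. (\<forall>j. x$j \<le> y$j) \<longrightarrow> f y \<le> f x)"

definition XB :: "real \<Rightarrow> (real^'m) set" where
  "XB B = {x \<in> cube. (\<Sum>j\<in>UNIV. x$j) \<le> B}"

definition pb_instance :: "real \<Rightarrow> nat \<Rightarrow> (nat \<Rightarrow> real^'m \<Rightarrow> real) \<Rightarrow> bool" where
  "pb_instance B n Cost \<longleftrightarrow> B > 0 \<and> (\<forall>i<n. Lfun (Cost i) \<and> mono_cost (Cost i))"

definition social_cost :: "nat \<Rightarrow> (nat \<Rightarrow> real^'m \<Rightarrow> real) \<Rightarrow> real^'m \<Rightarrow> real" where
  "social_cost n Cost x = (1 / real n) * (\<Sum>i<n. Cost i x)"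

definition social_opt :: "real \<Rightarrow> nat \<Rightarrow> (nat \<Rightarrow> real^'m \<Rightarrow> real) \<Rightarrow> real" where
  "social_opt B n Cost = (INF x\<in>XB B. social_cost n Cost x)"

definition panel_decision :: "nat \<Rightarrow> real \<Rightarrow> ((real^'m \<Rightarrow> real) list \<Rightarrow> real^'m) \<Rightarrow> bool" where
  "panel_decision k B xt \<longleftrightarrow>
     (\<forall>Cs. length Cs = k \<and> (\<forall>f\<in>set Cs. Lfun f) \<longrightarrow> xt Cs \<in> XB B)"

definition panel_alloc :: "((real^'m \<Rightarrow> real) list \<Rightarrow> real^'m) \<Rightarrow> (nat \<Rightarrow> real^'m \<Rightarrow> real) \<Rightarrow> nat set \<Rightarrow> real^'m" where
  "panel_alloc xt Cost S = xt (map Cost (sorted_list_of_set S))"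

definition panels :: "nat \<Rightarrow> nat \<Rightarrow> nat set set" where
  "panels n k = {S. S \<subseteq> {..<n} \<and> card S = k}"

definition expected_panel_cost ::
  "nat \<Rightarrow> nat \<Rightarrow> (nat \<Rightarrow> real^'m \<Rightarrow> real) \<Rightarrow> ((real^'m \<Rightarrow> real) list \<Rightarrow> real^'m) \<Rightarrow> real" where
  "expected_panel_cost n k Cost xt =
     (\<Sum>S\<in>panels n k. social_cost n Cost (panel_alloc xt Cost S)) / real (card (panels n k))"

end

theory Submission
  imports Defs
begin

theorem theorem3p4:
  fixes B :: real and k :: nat
    and xt :: "(real^'m \<Rightarrow> real) list \<Rightarrow> real^'m"
  assumes "CARD('m) \<ge> 2" and "k \<ge> 1" and "0 < B" and "B < real CARD('m)"
    and "panel_decision k B xt"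
  shows "\<exists>n (Cost :: nat \<Rightarrow> real^'m \<Rightarrow> real). n \<ge> k \<and> pb_instance B n Cost \<and>
           (\<forall>\<rho>::real. \<rho> > 1 \<longrightarrow> expected_panel_cost n k Cost xt > \<rho> * social_opt B n Cost)"
proof -
  define M where "M = real CARD('m)"
  have M2: "M \<ge> 2" using assms(1) unfolding M_def by simp
  define z :: "real^'m \<Rightarrow> real" where "z = (\<lambda>x. 0)"
  have Lz: "Lfun z" unfolding Lfun_def z_def l1dist_def by (auto intro: sum_nonneg)
  have mz: "mono_cost z" unfolding mono_cost_def z_def by simp
  define y where "y = xt (replicate k z)"
  have "y \<in> XB B" unfolding y_def using assms(5) Lz unfolding panel_decision_def by auto
  hence ysum: "(\<Sum>j\<in>UNIV. y$j) \<le> B" unfolding XB_def by auto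
  obtain j where yj: "y$j \<le> B / M"
  proof (rule ccontr)
    assume "\<not> thesis"
    with that have "\<forall>j. y$j > B / M" using not_le by blast
    hence "(\<Sum>j\<in>(UNIV::'m set). B / M) < (\<Sum>j\<in>UNIV. y$j)"
      by (intro sum_strict_mono) auto
    also have "(\<Sum>j\<in>(UNIV::'m set). B / M) = B" using M2 unfolding M_def by simp
    finally show False using ysum by simp
  qed
  define c where "c = min B 1"
  have "B / M < B" using M2 assms(3) by (simp add: divide_less_eq)
  moreover have "B / M < 1" using M2 assms(4) unfolding M_def by (simp add: divide_less_eq)
  ultimately have yc: "y$j < c" using yj unfolding c_def by simp
  have c0: "0 < c" "c \<le> 1" "c \<le> B" using assms(3) unfolding c_def by auto
  define g :: "real^'m \<Rightarrow> real" where "g = (\<lambda>x. max 0 (c - x$j))"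
  have Lg: "Lfun g" unfolding Lfun_def
  proof safe
    fix x :: "real^'m" assume "x \<in> cube"
    then show "0 \<le> g x" "g x \<le> 1" unfolding g_def cube_def using c0 by (auto, smt (verit))
  next
    fix x w :: "real^'m" assume "x \<in> cube" "w \<in> cube"
    have "\<bar>g x - g w\<bar> \<le> \<bar>x$j - w$j\<bar>" unfolding g_def by auto
    also have "\<dots> \<le> l1dist x w" unfolding l1dist_def
      by (rule member_le_sum[where f="\<lambda>i. \<bar>x$i - w$i\<bar>"]) auto
    finally show "\<bar>g x - g w\<bar> \<le> l1dist x w" .
  qed
  have mg: "mono_cost g" unfolding mono_cost_def g_def by (auto simp: max_def, smt (verit))
  define n where "n = 2 * k"
  define Cost :: "nat \<Rightarrow> real^'m \<Rightarrow> real" where "Cost = (\<lambda>i. if i < k then z else g)"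
  have Cnn: "Cost i x \<ge> 0" for i x unfolding Cost_def z_def g_def by auto
  have pb: "pb_instance B n Cost" unfolding pb_instance_def Cost_def using assms(3) Lz Lg mz mg by auto
  have scnn: "social_cost n Cost x \<ge> 0" for x unfolding social_cost_def by (auto intro!: sum_nonneg Cnn divide_nonneg_nonneg)
  define b :: "real^'m" where "b = (\<chi> i. if i = j then c else 0)"
  have bXB: "b \<in> XB B" unfolding XB_def cube_def b_def using c0 by auto
  have "Cost i b = 0" for i unfolding Cost_def z_def g_def b_def by auto
  hence scb: "social_cost n Cost b = 0" unfolding social_cost_def by simp
  have opt: "social_opt B n Cost = 0" unfolding social_opt_def
  proof (rule antisym)
    show "(INF x\<in>XB B. social_cost n Cost x) \<le> 0"
      using cINF_lower[of "social_cost n Cost" "XB B" b] bXB scb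
      by (metis bdd_belowI2 scnn)
    show "0 \<le> (INF x\<in>XB B. social_cost n Cost x)"
      using bXB by (intro cINF_greatest) (auto intro: scnn)
  qed
  define S0 where "S0 = {..<k}"
  have S0p: "S0 \<in> panels n k" unfolding panels_def S0_def n_def by auto
  have finP: "finite (panels n k)" unfolding panels_def
    by (rule finite_subset[of _ "Pow {..<n}"]) auto
  have "map Cost (sorted_list_of_set S0) = replicate k z"
    unfolding S0_def Cost_def by (simp add: lessThan_atLeast0 map_replicate_trivial[symmetric] list_eq_iff_nth_eq)
  hence pa: "panel_alloc xt Cost S0 = y" unfolding panel_alloc_def y_def by simp
  have gy: "g y > 0" unfolding g_def using yc by simp
  have "(\<Sum>i<n. Cost i y) > 0"
    using gy n_def assms(2) Cnn
    by (intro sum_pos2[where i=k]) (auto simp: Cost_def)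
  hence pos: "social_cost n Cost y > 0" unfolding social_cost_def n_def using assms(2) by simp
  have "(\<Sum>S\<in>panels n k. social_cost n Cost (panel_alloc xt Cost S)) > 0"
    using finP S0p pa pos scnn by (intro sum_pos2[where i=S0]) auto
  moreover have "card (panels n k) > 0" using finP S0p card_gt_0_iff by blast
  ultimately have "expected_panel_cost n k Cost xt > 0" unfolding expected_panel_cost_def by simp
  thus ?thesis using pb opt unfolding n_def by (intro exI[of _ "2*k"] exI[of _ Cost]) (auto simp: n_def)
qed

end
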